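(* Let $\mathcal{M}$ be a small $n$-abelian category, let $M\in(\mathcal{M},\mathcal{G})$ be a mono functor and let $M\hookrightarrow E$ be an essential extension of $M$ in $(\mathcal{M},\mathcal{G})$. Then $E$ is a mono functor.
   Context: $\mathcal{G}$ is the category of abelian groups and $(\mathcal{M},\mathcal{G})$ the abelian category of additive covariant functors $\mathcal{M}\to\mathcal{G}$. A functor $F\in(\mathcal{M},\mathcal{G})$ is a mono functor if $F(f)$ is injective for every monomorphism $f$ of $\mathcal{M}$. A monomorphism $A\to B$ is an essential extension if for every nonzero monomorphism $B'\to B$ the images of $A\to B$ and $B'\to B$ have nonzero intersection. An $n$-abelian category is an idempotent complete additive category in which every morphism has an $n$-kernel and an $n$-cokernel, and in which every monomorphism (resp. epimorphism) together with any of its $n$-cokernels (resp. $n$-kernels) forms an $n$-exact sequence. *)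

theory Defs
  imports "HOL-Algebra.Group"
begin

record ('o,'m) addcat =
  Ob  :: "'o set"
  Mor :: "'o \<Rightarrow> 'o \<Rightarrow> 'm set"
  Cmp :: "'o \<Rightarrow> 'o \<Rightarrow> 'o \<Rightarrow> 'm \<Rightarrow> 'm \<Rightarrow> 'm"  (* Cmp X Y Z g f = g o f for f : X -> Y, g : Y -> Z *)
  Idm :: "'o \<Rightarrow> 'm"
  Add :: "'o \<Rightarrow> 'o \<Rightarrow> 'm \<Rightarrow> 'm \<Rightarrow> 'm"
  Zer :: "'o \<Rightarrow> 'o \<Rightarrow> 'm"

definition hom_group :: "('o,'m) addcat \<Rightarrow> 'o \<Rightarrow> 'o \<Rightarrow> 'm monoid" where
  "hom_group C X Y = \<lparr>carrier = Mor C X Y, mult = Add C X Y, one = Zer C X Y\<rparr>"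

definition preadditive :: "('o,'m) addcat \<Rightarrow> bool" where
  "preadditive C \<longleftrightarrow>
     (\<forall>X\<in>Ob C. Idm C X \<in> Mor C X X) \<and>
     (\<forall>X\<in>Ob C. \<forall>Y\<in>Ob C. \<forall>Z\<in>Ob C. \<forall>f\<in>Mor C X Y. \<forall>g\<in>Mor C Y Z.
        Cmp C X Y Z g f \<in> Mor C X Z) \<and>
     (\<forall>W\<in>Ob C. \<forall>X\<in>Ob C. \<forall>Y\<in>Ob C. \<forall>Z\<in>Ob C.
        \<forall>f\<in>Mor C W X. \<forall>g\<in>Mor C X Y. \<forall>h\<in>Mor C Y Z.
        Cmp C W Y Z h (Cmp C W X Y g f) = Cmp C W X Z (Cmp C X Y Z h g) f) \<and>
     (\<forall>X\<in>Ob C. \<forall>Y\<in>Ob C. \<forall>f\<in>Mor C X Y.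
        Cmp C X X Y f (Idm C X) = f \<and> Cmp C X Y Y (Idm C Y) f = f) \<and>
     (\<forall>X\<in>Ob C. \<forall>Y\<in>Ob C. comm_group (hom_group C X Y)) \<and>
     (\<forall>X\<in>Ob C. \<forall>Y\<in>Ob C. \<forall>Z\<in>Ob C.
        \<forall>f\<in>Mor C X Y. \<forall>f'\<in>Mor C X Y. \<forall>g\<in>Mor C Y Z. \<forall>g'\<in>Mor C Y Z.
        Cmp C X Y Z (Add C Y Z g g') f = Add C X Z (Cmp C X Y Z g f) (Cmp C X Y Z g' f) \<and>
        Cmp C X Y Z g (Add C X Y f f') = Add C X Z (Cmp C X Y Z g f) (Cmp C X Y Z g f'))"

definition zero_object :: "('o,'m) addcat \<Rightarrow> 'o \<Rightarrow> bool" where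
  "zero_object C Z \<longleftrightarrow> Z \<in> Ob C \<and>
     (\<forall>X\<in>Ob C. Mor C Z X = {Zer C Z X} \<and> Mor C X Z = {Zer C X Z})"

definition biproduct :: "('o,'m) addcat \<Rightarrow> 'o \<Rightarrow> 'o \<Rightarrow> 'o \<Rightarrow> 'm \<Rightarrow> 'm \<Rightarrow> 'm \<Rightarrow> 'm \<Rightarrow> bool" where
  "biproduct C A B P i1 i2 p1 p2 \<longleftrightarrow> P \<in> Ob C \<and>
     i1 \<in> Mor C A P \<and> i2 \<in> Mor C B P \<and> p1 \<in> Mor C P A \<and> p2 \<in> Mor C P B \<and>
     Cmp C A P A p1 i1 = Idm C A \<and> Cmp C B P B p2 i2 = Idm C B \<and>
     Cmp C A P B p2 i1 = Zer C A B \<and> Cmp C B P A p1 i2 = Zer C B A \<and>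
     Add C P P (Cmp C P A P i1 p1) (Cmp C P B P i2 p2) = Idm C P"

definition additive :: "('o,'m) addcat \<Rightarrow> bool" where
  "additive C \<longleftrightarrow> preadditive C \<and> (\<exists>Z. zero_object C Z) \<and>
     (\<forall>A\<in>Ob C. \<forall>B\<in>Ob C. \<exists>P i1 i2 p1 p2. biproduct C A B P i1 i2 p1 p2)"

definition idempotent_complete :: "('o,'m) addcat \<Rightarrow> bool" where
  "idempotent_complete C \<longleftrightarrow>
     (\<forall>X\<in>Ob C. \<forall>e\<in>Mor C X X. Cmp C X X X e e = e \<longrightarrow>
        (\<exists>Y\<in>Ob C. \<exists>r\<in>Mor C X Y. \<exists>s\<in>Mor C Y X.
           Cmp C Y X Y r s = Idm C Y \<and> Cmp C X Y X s r = e))"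

definition cat_mono :: "('o,'m) addcat \<Rightarrow> 'o \<Rightarrow> 'o \<Rightarrow> 'm \<Rightarrow> bool" where
  "cat_mono C X Y f \<longleftrightarrow> f \<in> Mor C X Y \<and>
     (\<forall>W\<in>Ob C. \<forall>g\<in>Mor C W X. \<forall>h\<in>Mor C W X. Cmp C W X Y f g = Cmp C W X Y f h \<longrightarrow> g = h)"

definition cat_epi :: "('o,'m) addcat \<Rightarrow> 'o \<Rightarrow> 'o \<Rightarrow> 'm \<Rightarrow> bool" where
  "cat_epi C X Y f \<longleftrightarrow> f \<in> Mor C X Y \<and>
     (\<forall>W\<in>Ob C. \<forall>g\<in>Mor C Y W. \<forall>h\<in>Mor C Y W. Cmp C X Y W g f = Cmp C X Y W h f \<longrightarrow> g = h)"

definition nseq :: "('o,'m) addcat \<Rightarrow> nat \<Rightarrow> (nat \<Rightarrow> 'o) \<Rightarrow> (nat \<Rightarrow> 'm) \<Rightarrow> bool" where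
  "nseq C n X d \<longleftrightarrow> (\<forall>i\<le>Suc n. X i \<in> Ob C) \<and> (\<forall>i\<le>n. d i \<in> Mor C (X i) (X (Suc i)))"

text \<open>(d 0, ..., d (n-1)) is an n-kernel of d n: for every Y the sequence
  0 -> C(Y,X 0) -> C(Y,X 1) -> ... -> C(Y,X n) -> C(Y,X (n+1)) is exact.\<close>
definition is_nkernel :: "('o,'m) addcat \<Rightarrow> nat \<Rightarrow> (nat \<Rightarrow> 'o) \<Rightarrow> (nat \<Rightarrow> 'm) \<Rightarrow> bool" where
  "is_nkernel C n X d \<longleftrightarrow> nseq C n X d \<and>
     (\<forall>i<n. Cmp C (X i) (X (Suc i)) (X (Suc (Suc i))) (d (Suc i)) (d i) = Zer C (X i) (X (Suc (Suc i)))) \<and>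
     (\<forall>Y\<in>Ob C.
        (\<forall>g\<in>Mor C Y (X 0). Cmp C Y (X 0) (X 1) (d 0) g = Zer C Y (X 1) \<longrightarrow> g = Zer C Y (X 0)) \<and>
        (\<forall>i. 1 \<le> i \<and> i \<le> n \<longrightarrow>
           (\<forall>g\<in>Mor C Y (X i). Cmp C Y (X i) (X (Suc i)) (d i) g = Zer C Y (X (Suc i)) \<longrightarrow>
              (\<exists>h\<in>Mor C Y (X (i - 1)). Cmp C Y (X (i - 1)) (X i) (d (i - 1)) h = g))))"

text \<open>(d 1, ..., d n) is an n-cokernel of d 0: for every Y the sequence
  0 -> C(X (n+1),Y) -> C(X n,Y) -> ... -> C(X 1,Y) -> C(X 0,Y) is exact.\<close>
definition is_ncokernel :: "('o,'m) addcat \<Rightarrow> nat \<Rightarrow> (nat \<Rightarrow> 'o) \<Rightarrow> (nat \<Rightarrow> 'm) \<Rightarrow> bool" where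
  "is_ncokernel C n X d \<longleftrightarrow> nseq C n X d \<and>
     (\<forall>i<n. Cmp C (X i) (X (Suc i)) (X (Suc (Suc i))) (d (Suc i)) (d i) = Zer C (X i) (X (Suc (Suc i)))) \<and>
     (\<forall>Y\<in>Ob C.
        (\<forall>g\<in>Mor C (X (Suc n)) Y. Cmp C (X n) (X (Suc n)) Y g (d n) = Zer C (X n) Y \<longrightarrow> g = Zer C (X (Suc n)) Y) \<and>
        (\<forall>i. 1 \<le> i \<and> i \<le> n \<longrightarrow>
           (\<forall>g\<in>Mor C (X i) Y. Cmp C (X (i - 1)) (X i) Y g (d (i - 1)) = Zer C (X (i - 1)) Y \<longrightarrow>
              (\<exists>h\<in>Mor C (X (Suc i)) Y. Cmp C (X i) (X (Suc i)) Y h (d i) = g))))"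

definition n_exact :: "('o,'m) addcat \<Rightarrow> nat \<Rightarrow> (nat \<Rightarrow> 'o) \<Rightarrow> (nat \<Rightarrow> 'm) \<Rightarrow> bool" where
  "n_exact C n X d \<longleftrightarrow> is_nkernel C n X d \<and> is_ncokernel C n X d"

definition n_abelian :: "('o,'m) addcat \<Rightarrow> nat \<Rightarrow> bool" where
  "n_abelian C n \<longleftrightarrow> additive C \<and> idempotent_complete C \<and>
     (\<forall>A\<in>Ob C. \<forall>B\<in>Ob C. \<forall>f\<in>Mor C A B.
        (\<exists>X d. X n = A \<and> X (Suc n) = B \<and> d n = f \<and> is_nkernel C n X d) \<and>
        (\<exists>X d. X 0 = A \<and> X 1 = B \<and> d 0 = f \<and> is_ncokernel C n X d)) \<and>
     (\<forall>X d. cat_mono C (X 0) (X 1) (d 0) \<and> is_ncokernel C n X d \<longrightarrow> n_exact C n X d) \<and>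
     (\<forall>X d. cat_epi C (X n) (X (Suc n)) (d n) \<and> is_nkernel C n X d \<longrightarrow> n_exact C n X d)"

text \<open>A functor F : C -> Ab is given by FO X (an abelian group) and
  FM X Y f : FO X -> FO Y for f : X -> Y.\<close>
definition additive_functor :: "('o,'m) addcat \<Rightarrow> ('o \<Rightarrow> 'g monoid) \<Rightarrow> ('o \<Rightarrow> 'o \<Rightarrow> 'm \<Rightarrow> 'g \<Rightarrow> 'g) \<Rightarrow> bool" where
  "additive_functor C FO FM \<longleftrightarrow>
     (\<forall>X\<in>Ob C. comm_group (FO X)) \<and>
     (\<forall>X\<in>Ob C. \<forall>Y\<in>Ob C. \<forall>f\<in>Mor C X Y. FM X Y f \<in> hom (FO X) (FO Y)) \<and>
     (\<forall>X\<in>Ob C. \<forall>x\<in>carrier (FO X). FM X X (Idm C X) x = x) \<and>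
     (\<forall>X\<in>Ob C. \<forall>Y\<in>Ob C. \<forall>Z\<in>Ob C. \<forall>f\<in>Mor C X Y. \<forall>g\<in>Mor C Y Z. \<forall>x\<in>carrier (FO X).
        FM X Z (Cmp C X Y Z g f) x = FM Y Z g (FM X Y f x)) \<and>
     (\<forall>X\<in>Ob C. \<forall>Y\<in>Ob C. \<forall>f\<in>Mor C X Y. \<forall>g\<in>Mor C X Y. \<forall>x\<in>carrier (FO X).
        FM X Y (Add C X Y f g) x = FM X Y f x \<otimes>\<^bsub>FO Y\<^esub> FM X Y g x)"

definition nat_trans :: "('o,'m) addcat \<Rightarrow> ('o \<Rightarrow> 'a monoid) \<Rightarrow> ('o \<Rightarrow> 'o \<Rightarrow> 'm \<Rightarrow> 'a \<Rightarrow> 'a)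
     \<Rightarrow> ('o \<Rightarrow> 'b monoid) \<Rightarrow> ('o \<Rightarrow> 'o \<Rightarrow> 'm \<Rightarrow> 'b \<Rightarrow> 'b) \<Rightarrow> ('o \<Rightarrow> 'a \<Rightarrow> 'b) \<Rightarrow> bool" where
  "nat_trans C FO FM GO GM \<eta> \<longleftrightarrow>
     (\<forall>X\<in>Ob C. \<eta> X \<in> hom (FO X) (GO X)) \<and>
     (\<forall>X\<in>Ob C. \<forall>Y\<in>Ob C. \<forall>f\<in>Mor C X Y. \<forall>x\<in>carrier (FO X).
        \<eta> Y (FM X Y f x) = GM X Y f (\<eta> X x))"

text \<open>Monomorphisms in the functor category (M,G): componentwise injective natural transformations.\<close>
definition nat_mono :: "('o,'m) addcat \<Rightarrow> ('o \<Rightarrow> 'a monoid) \<Rightarrow> ('o \<Rightarrow> 'o \<Rightarrow> 'm \<Rightarrow> 'a \<Rightarrow> 'a)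
     \<Rightarrow> ('o \<Rightarrow> 'b monoid) \<Rightarrow> ('o \<Rightarrow> 'o \<Rightarrow> 'm \<Rightarrow> 'b \<Rightarrow> 'b) \<Rightarrow> ('o \<Rightarrow> 'a \<Rightarrow> 'b) \<Rightarrow> bool" where
  "nat_mono C FO FM GO GM \<eta> \<longleftrightarrow> nat_trans C FO FM GO GM \<eta> \<and>
     (\<forall>X\<in>Ob C. inj_on (\<eta> X) (carrier (FO X)))"

definition nonzero_functor :: "('o,'m) addcat \<Rightarrow> ('o \<Rightarrow> 'g monoid) \<Rightarrow> bool" where
  "nonzero_functor C FO \<longleftrightarrow> (\<exists>X\<in>Ob C. carrier (FO X) \<noteq> {\<one>\<^bsub>FO X\<^esub>})"

definition essential_extension :: "('o,'m) addcat \<Rightarrow> ('o \<Rightarrow> 'a monoid) \<Rightarrow> ('o \<Rightarrow> 'o \<Rightarrow> 'm \<Rightarrow> 'a \<Rightarrow> 'a)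
     \<Rightarrow> ('o \<Rightarrow> 'b monoid) \<Rightarrow> ('o \<Rightarrow> 'o \<Rightarrow> 'm \<Rightarrow> 'b \<Rightarrow> 'b) \<Rightarrow> ('o \<Rightarrow> 'a \<Rightarrow> 'b) \<Rightarrow> bool" where
  "essential_extension C MO MM EO EM \<eta> \<longleftrightarrow> nat_mono C MO MM EO EM \<eta> \<and>
     (\<forall>(BO :: 'o \<Rightarrow> 'b monoid) BM \<iota>.
        additive_functor C BO BM \<and> nat_mono C BO BM EO EM \<iota> \<and> nonzero_functor C BO \<longrightarrow>
        (\<exists>X\<in>Ob C. \<exists>y. y \<in> \<eta> X ` carrier (MO X) \<and> y \<in> \<iota> X ` carrier (BO X) \<and> y \<noteq> \<one>\<^bsub>EO X\<^esub>))"

definition mono_functor :: "('o,'m) addcat \<Rightarrow> ('o \<Rightarrow> 'g monoid) \<Rightarrow> ('o \<Rightarrow> 'o \<Rightarrow> 'm \<Rightarrow> 'g \<Rightarrow> 'g) \<Rightarrow> bool" where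
  "mono_functor C FO FM \<longleftrightarrow>
     (\<forall>X\<in>Ob C. \<forall>Y\<in>Ob C. \<forall>f. cat_mono C X Y f \<longrightarrow> inj_on (FM X Y f) (carrier (FO X)))"

end

theory Submission
  imports Defs
begin

lemma hg_simps[simp]: "carrier (hom_group C X Y) = Mor C X Y"
  "mult (hom_group C X Y) = Add C X Y" "one (hom_group C X Y) = Zer C X Y"
  by (simp_all add: hom_group_def)

definition neg :: "('o,'m) addcat \<Rightarrow> 'o \<Rightarrow> 'o \<Rightarrow> 'm \<Rightarrow> 'm" where
  "neg C X Y f = inv\<^bsub>hom_group C X Y\<^esub> f"

context fixes C :: "('o,'m) addcat" assumes pa: "preadditive C" begin

lemma pa_id: "X \<in> Ob C \<Longrightarrow> Idm C X \<in> Mor C X X"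
  using pa unfolding preadditive_def by auto
lemma pa_cmp: "X\<in>Ob C \<Longrightarrow> Y \<in> Ob C \<Longrightarrow> Z \<in> Ob C \<Longrightarrow> f \<in> Mor C X Y \<Longrightarrow> g \<in> Mor C Y Z \<Longrightarrow> Cmp C X Y Z g f \<in> Mor C X Z"
  using pa unfolding preadditive_def by auto
lemma pa_assoc: "W\<in>Ob C \<Longrightarrow> X\<in>Ob C \<Longrightarrow> Y \<in> Ob C \<Longrightarrow> Z \<in> Ob C \<Longrightarrow> f \<in> Mor C W X \<Longrightarrow> g \<in> Mor C X Y \<Longrightarrow> h \<in> Mor C Y Z \<Longrightarrow>
   Cmp C W Y Z h (Cmp C W X Y g f) = Cmp C W X Z (Cmp C X Y Z h g) f"
  using pa unfolding preadditive_def by blast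
lemma pa_idr: "X\<in>Ob C \<Longrightarrow> Y \<in> Ob C \<Longrightarrow> f \<in> Mor C X Y \<Longrightarrow> Cmp C X X Y f (Idm C X) = f"
  using pa unfolding preadditive_def by blast
lemma pa_idl: "X\<in>Ob C \<Longrightarrow> Y \<in> Ob C \<Longrightarrow> f \<in> Mor C X Y \<Longrightarrow> Cmp C X Y Y (Idm C Y) f = f"
  using pa unfolding preadditive_def by blast
lemma pa_grp: "X\<in>Ob C \<Longrightarrow> Y \<in> Ob C \<Longrightarrow> comm_group (hom_group C X Y)"
  using pa unfolding preadditive_def by blast
lemma pa_distl: "X\<in>Ob C \<Longrightarrow> Y \<in> Ob C \<Longrightarrow> Z \<in> Ob C \<Longrightarrow> f \<in> Mor C X Y \<Longrightarrow> g \<in> Mor C Y Z \<Longrightarrow> g' \<in> Mor C Y Z \<Longrightarrow>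
  Cmp C X Y Z (Add C Y Z g g') f = Add C X Z (Cmp C X Y Z g f) (Cmp C X Y Z g' f)"
  using pa unfolding preadditive_def by blast
lemma pa_distr: "X\<in>Ob C \<Longrightarrow> Y \<in> Ob C \<Longrightarrow> Z \<in> Ob C \<Longrightarrow> f \<in> Mor C X Y \<Longrightarrow> f' \<in> Mor C X Y \<Longrightarrow> g \<in> Mor C Y Z \<Longrightarrow>
  Cmp C X Y Z g (Add C X Y f f') = Add C X Z (Cmp C X Y Z g f) (Cmp C X Y Z g f')"
  using pa unfolding preadditive_def by blast

lemma pa_add: "X\<in>Ob C \<Longrightarrow> Y \<in> Ob C \<Longrightarrow> f \<in> Mor C X Y \<Longrightarrow> g \<in> Mor C X Y \<Longrightarrow> Add C X Y f g \<in> Mor C X Y"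
proof -
  assume as: "X\<in>Ob C" "Y \<in> Ob C" "f \<in> Mor C X Y" "g \<in> Mor C X Y"
  interpret G: comm_group "hom_group C X Y" using pa_grp as by blast
  show ?thesis using as G.m_closed[of f g] by simp
qed
lemma pa_zer: "X\<in>Ob C \<Longrightarrow> Y \<in> Ob C \<Longrightarrow> Zer C X Y \<in> Mor C X Y"
proof -
  assume as: "X\<in>Ob C" "Y \<in> Ob C"
  interpret G: comm_group "hom_group C X Y" using pa_grp as by blast
  show ?thesis using G.one_closed by simp
qed
lemma pa_neg: "X\<in>Ob C \<Longrightarrow> Y \<in> Ob C \<Longrightarrow> f \<in> Mor C X Y \<Longrightarrow> neg C X Y f \<in> Mor C X Y"
proof -
  assume as: "X\<in>Ob C" "Y \<in> Ob C" "f \<in> Mor C X Y"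
  interpret G: comm_group "hom_group C X Y" using pa_grp as by blast
  show ?thesis unfolding neg_def using as G.inv_closed[of f] by simp
qed
lemma pa_add_neg: "X\<in>Ob C \<Longrightarrow> Y \<in> Ob C \<Longrightarrow> f \<in> Mor C X Y \<Longrightarrow> Add C X Y f (neg C X Y f) = Zer C X Y"
proof -
  assume as: "X\<in>Ob C" "Y \<in> Ob C" "f \<in> Mor C X Y"
  interpret G: comm_group "hom_group C X Y" using pa_grp as by blast
  show ?thesis unfolding neg_def using as G.r_inv[of f] by simp
qed
lemma pa_zer_add: "X\<in>Ob C \<Longrightarrow> Y \<in> Ob C \<Longrightarrow> f \<in> Mor C X Y \<Longrightarrow> Add C X Y (Zer C X Y) f = f"
proof -
  assume as: "X\<in>Ob C" "Y \<in> Ob C" "f \<in> Mor C X Y"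
  interpret G: comm_group "hom_group C X Y" using pa_grp as by blast
  show ?thesis using as G.l_one[of f] by simp
qed
lemma pa_add_zer: "X\<in>Ob C \<Longrightarrow> Y \<in> Ob C \<Longrightarrow> f \<in> Mor C X Y \<Longrightarrow> Add C X Y f (Zer C X Y) = f"
proof -
  assume as: "X\<in>Ob C" "Y \<in> Ob C" "f \<in> Mor C X Y"
  interpret G: comm_group "hom_group C X Y" using pa_grp as by blast
  show ?thesis using as G.r_one[of f] by simp
qed
lemma pa_add_comm: "X\<in>Ob C \<Longrightarrow> Y \<in> Ob C \<Longrightarrow> f \<in> Mor C X Y \<Longrightarrow> g \<in> Mor C X Y \<Longrightarrow> Add C X Y f g = Add C X Y g f"
proof -
  assume as: "X\<in>Ob C" "Y \<in> Ob C" "f \<in> Mor C X Y" "g \<in> Mor C X Y"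
  interpret G: comm_group "hom_group C X Y" using pa_grp as by blast
  show ?thesis using as G.m_comm[of f g] by simp
qed
lemma pa_eq_neg: "X\<in>Ob C \<Longrightarrow> Y \<in> Ob C \<Longrightarrow> a \<in> Mor C X Y \<Longrightarrow> b \<in> Mor C X Y \<Longrightarrow> Add C X Y a b = Zer C X Y \<Longrightarrow> a = neg C X Y b"
proof -
  assume as: "X\<in>Ob C" "Y \<in> Ob C" "a \<in> Mor C X Y" "b \<in> Mor C X Y" "Add C X Y a b = Zer C X Y"
  interpret G: comm_group "hom_group C X Y" using pa_grp as by blast
  show ?thesis unfolding neg_def using as G.inv_equality[of a b] by simp
qed
lemma pa_sub_zero: "X\<in>Ob C \<Longrightarrow> Y \<in> Ob C \<Longrightarrow> a \<in> Mor C X Y \<Longrightarrow> b \<in> Mor C X Y \<Longrightarrow> Add C X Y a (neg C X Y b) = Zer C X Y \<Longrightarrow> a = b"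
proof -
  assume as: "X\<in>Ob C" "Y \<in> Ob C" "a \<in> Mor C X Y" "b \<in> Mor C X Y" "Add C X Y a (neg C X Y b) = Zer C X Y"
  interpret G: comm_group "hom_group C X Y" using pa_grp as by blast
  have "a = inv\<^bsub>hom_group C X Y\<^esub> (inv\<^bsub>hom_group C X Y\<^esub> b)"
    using as G.inv_equality[of a "inv\<^bsub>hom_group C X Y\<^esub> b"] G.inv_closed[of b] unfolding neg_def by simp
  then show ?thesis using as G.inv_inv[of b] by simp
qed
lemma pa_idem: "X\<in>Ob C \<Longrightarrow> Y \<in> Ob C \<Longrightarrow> z \<in> Mor C X Y \<Longrightarrow> Add C X Y z z = z \<Longrightarrow> z = Zer C X Y"
proof -
  assume as: "X\<in>Ob C" "Y \<in> Ob C" "z \<in> Mor C X Y" "Add C X Y z z = z"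
  interpret G: comm_group "hom_group C X Y" using pa_grp as by blast
  show ?thesis using as
    using G.l_cancel_one[of z z] by simp
qed

lemma cmp_zer_r: "X\<in>Ob C \<Longrightarrow> Y \<in> Ob C \<Longrightarrow> Z \<in> Ob C \<Longrightarrow> g \<in> Mor C Y Z \<Longrightarrow> Cmp C X Y Z g (Zer C X Y) = Zer C X Z"
proof -
  assume as: "X\<in>Ob C" "Y \<in> Ob C" "Z \<in> Ob C" "g \<in> Mor C Y Z"
  have z: "Zer C X Y \<in> Mor C X Y" using pa_zer as by blast
  have c: "Cmp C X Y Z g (Zer C X Y) \<in> Mor C X Z" using pa_cmp as z by blast
  have "Cmp C X Y Z g (Zer C X Y) = Cmp C X Y Z g (Add C X Y (Zer C X Y) (Zer C X Y))"
    using pa_zer_add[OF as(1,2) z] by simp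
  also have "\<dots> = Add C X Z (Cmp C X Y Z g (Zer C X Y)) (Cmp C X Y Z g (Zer C X Y))"
    using pa_distr[OF as(1,2,3) z z as(4)] .
  finally show ?thesis using pa_idem[OF as(1,3) c] by simp
qed
lemma cmp_zer_l: "X\<in>Ob C \<Longrightarrow> Y \<in> Ob C \<Longrightarrow> Z \<in> Ob C \<Longrightarrow> f \<in> Mor C X Y \<Longrightarrow> Cmp C X Y Z (Zer C Y Z) f = Zer C X Z"
proof -
  assume as: "X\<in>Ob C" "Y \<in> Ob C" "Z \<in> Ob C" "f \<in> Mor C X Y"
  have z: "Zer C Y Z \<in> Mor C Y Z" using pa_zer as by blast
  have c: "Cmp C X Y Z (Zer C Y Z) f \<in> Mor C X Z" using pa_cmp as z by blast
  have "Cmp C X Y Z (Zer C Y Z) f = Cmp C X Y Z (Add C Y Z (Zer C Y Z) (Zer C Y Z)) f"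
    using pa_zer_add[OF as(2,3) z] by simp
  also have "\<dots> = Add C X Z (Cmp C X Y Z (Zer C Y Z) f) (Cmp C X Y Z (Zer C Y Z) f)"
    using pa_distl[OF as(1,2,3) as(4) z z] .
  finally show ?thesis using pa_idem[OF as(1,3) c] by simp
qed
lemma cmp_neg_l: "X\<in>Ob C \<Longrightarrow> Y \<in> Ob C \<Longrightarrow> Z \<in> Ob C \<Longrightarrow> f \<in> Mor C X Y \<Longrightarrow> g \<in> Mor C Y Z \<Longrightarrow>
   Cmp C X Y Z (neg C Y Z g) f = neg C X Z (Cmp C X Y Z g f)"
proof -
  assume as: "X\<in>Ob C" "Y \<in> Ob C" "Z \<in> Ob C" "f \<in> Mor C X Y" "g \<in> Mor C Y Z"
  have ng: "neg C Y Z g \<in> Mor C Y Z" by (rule pa_neg[OF as(2,3,5)])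
  have c1: "Cmp C X Y Z (neg C Y Z g) f \<in> Mor C X Z" by (rule pa_cmp[OF as(1,2,3,4) ng])
  have c2: "Cmp C X Y Z g f \<in> Mor C X Z" by (rule pa_cmp[OF as(1,2,3,4,5)])
  have e1: "Add C Y Z (neg C Y Z g) g = Zer C Y Z"
    using pa_add_neg[OF as(2,3,5)] pa_add_comm[OF as(2,3,5) ng] by simp
  have "Add C X Z (Cmp C X Y Z (neg C Y Z g) f) (Cmp C X Y Z g f) = Cmp C X Y Z (Add C Y Z (neg C Y Z g) g) f"
    by (rule pa_distl[OF as(1,2,3,4) ng as(5), symmetric])
  also have "\<dots> = Zer C X Z" unfolding e1 by (rule cmp_zer_l[OF as(1,2,3,4)])
  finally show ?thesis by (rule pa_eq_neg[OF as(1,3) c1 c2])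
qed
lemma cmp_neg_r: "X\<in>Ob C \<Longrightarrow> Y \<in> Ob C \<Longrightarrow> Z \<in> Ob C \<Longrightarrow> f \<in> Mor C X Y \<Longrightarrow> g \<in> Mor C Y Z \<Longrightarrow>
   Cmp C X Y Z g (neg C X Y f) = neg C X Z (Cmp C X Y Z g f)"
proof -
  assume as: "X\<in>Ob C" "Y \<in> Ob C" "Z \<in> Ob C" "f \<in> Mor C X Y" "g \<in> Mor C Y Z"
  have nf: "neg C X Y f \<in> Mor C X Y" by (rule pa_neg[OF as(1,2,4)])
  have c1: "Cmp C X Y Z g (neg C X Y f) \<in> Mor C X Z" by (rule pa_cmp[OF as(1,2,3) nf as(5)])
  have c2: "Cmp C X Y Z g f \<in> Mor C X Z" by (rule pa_cmp[OF as(1,2,3,4,5)])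
  have e1: "Add C X Y (neg C X Y f) f = Zer C X Y"
    using pa_add_neg[OF as(1,2,4)] pa_add_comm[OF as(1,2,4) nf] by simp
  have "Add C X Z (Cmp C X Y Z g (neg C X Y f)) (Cmp C X Y Z g f) = Cmp C X Y Z g (Add C X Y (neg C X Y f) f)"
    by (rule pa_distr[OF as(1,2,3) nf as(4,5), symmetric])
  also have "\<dots> = Zer C X Z" unfolding e1 by (rule cmp_zer_r[OF as(1,2,3,5)])
  finally show ?thesis by (rule pa_eq_neg[OF as(1,3) c1 c2])
qed

lemma na_add: "n_abelian C n \<Longrightarrow> additive C"
  unfolding n_abelian_def by (drule conjunct1)
lemma na_cok: "n_abelian C n \<Longrightarrow> A\<in>Ob C \<Longrightarrow> B\<in>Ob C \<Longrightarrow> f\<in>Mor C A B \<Longrightarrow>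
   \<exists>X d. X 0 = A \<and> X 1 = B \<and> d 0 = f \<and> is_ncokernel C n X d"
  unfolding n_abelian_def by (drule conjunct2, drule conjunct2, drule conjunct1) blast
lemma na_exact: "n_abelian C n \<Longrightarrow> cat_mono C (X 0) (X 1) (d 0) \<Longrightarrow> is_ncokernel C n X d \<Longrightarrow> n_exact C n X d"
  unfolding n_abelian_def by (drule conjunct2, drule conjunct2, drule conjunct2, drule conjunct1) blast
lemma add_bp: "additive C \<Longrightarrow> A\<in>Ob C \<Longrightarrow> B\<in>Ob C \<Longrightarrow> \<exists>P i1 i2 p1 p2. biproduct C A B P i1 i2 p1 p2"
  unfolding additive_def by (drule conjunct2, drule conjunct2) blast

lemma pushout_mono:
  assumes na: "n_abelian C n" and n1: "1 \<le> n"
    and ob: "Z \<in> Ob C" "Y \<in> Ob C" "W \<in> Ob C"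
    and fm: "cat_mono C Z Y f" and hm: "h \<in> Mor C Z W"
  shows "\<exists>W'\<in>Ob C. \<exists>g h'. cat_mono C W W' g \<and> h' \<in> Mor C Y W' \<and>
            Cmp C Z W W' g h = Cmp C Z Y W' h' f"
proof -
  note Z = ob(1) and Y = ob(2) and W = ob(3)
  have fM: "f \<in> Mor C Z Y" using fm unfolding cat_mono_def by (rule conjunct1)
  obtain P i1 i2 p1 p2 where bp: "biproduct C W Y P i1 i2 p1 p2"
    using add_bp[OF na_add[OF na] W Y] by blast
  have P: "P \<in> Ob C" and i1: "i1 \<in> Mor C W P" and i2: "i2 \<in> Mor C Y P"
    and p1: "p1 \<in> Mor C P W" and p2: "p2 \<in> Mor C P Y"
    and p1i1: "Cmp C W P W p1 i1 = Idm C W" and p2i2: "Cmp C Y P Y p2 i2 = Idm C Y"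
    and p2i1: "Cmp C W P Y p2 i1 = Zer C W Y"
    using bp unfolding biproduct_def by simp_all
  define d0 where "d0 = Add C Z P (Cmp C Z W P i1 h) (Cmp C Z Y P i2 f)"
  have i1h: "Cmp C Z W P i1 h \<in> Mor C Z P" by (rule pa_cmp[OF Z W P hm i1])
  have i2f: "Cmp C Z Y P i2 f \<in> Mor C Z P" by (rule pa_cmp[OF Z Y P fM i2])
  have d0M: "d0 \<in> Mor C Z P" unfolding d0_def by (rule pa_add[OF Z P i1h i2f])
  have p2d0: "Cmp C Z P Y p2 d0 = f"
  proof -
    have "Cmp C Z P Y p2 d0 = Add C Z Y (Cmp C Z P Y p2 (Cmp C Z W P i1 h)) (Cmp C Z P Y p2 (Cmp C Z Y P i2 f))"
      unfolding d0_def by (rule pa_distr[OF Z P Y i1h i2f p2])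
    also have "Cmp C Z P Y p2 (Cmp C Z W P i1 h) = Cmp C Z W Y (Cmp C W P Y p2 i1) h"
      by (rule pa_assoc[OF Z W P Y hm i1 p2])
    also have "\<dots> = Zer C Z Y" unfolding p2i1 by (rule cmp_zer_l[OF Z W Y hm])
    also have "Cmp C Z P Y p2 (Cmp C Z Y P i2 f) = Cmp C Z Y Y (Cmp C Y P Y p2 i2) f"
      by (rule pa_assoc[OF Z Y P Y fM i2 p2])
    also have "\<dots> = f" unfolding p2i2 by (rule pa_idl[OF Z Y fM])
    finally show ?thesis using pa_zer_add[OF Z Y fM] by simp
  qed
  have d0mono: "cat_mono C Z P d0"
    unfolding cat_mono_def
  proof (intro conjI d0M ballI impI)
    fix V a b assume V: "V \<in> Ob C" and a: "a \<in> Mor C V Z" and b: "b \<in> Mor C V Z"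
      and eq: "Cmp C V Z P d0 a = Cmp C V Z P d0 b"
    have "Cmp C V Z Y f a = Cmp C V P Y p2 (Cmp C V Z P d0 a)"
      using pa_assoc[OF V Z P Y a d0M p2] p2d0 by simp
    also have "\<dots> = Cmp C V P Y p2 (Cmp C V Z P d0 b)" using eq by simp
    also have "\<dots> = Cmp C V Z Y f b"
      using pa_assoc[OF V Z P Y b d0M p2] p2d0 by simp
    finally show "a = b" using fm V a b unfolding cat_mono_def by blast
  qed
  obtain X d where X0: "X 0 = Z" and X1: "X 1 = P" and d0d: "d 0 = d0" and cok: "is_ncokernel C n X d"
    using na_cok[OF na Z P d0M] by blast
  have ex: "n_exact C n X d" using na_exact[OF na _ cok] d0mono X0 X1 d0d by simp
  then have ker: "is_nkernel C n X d" unfolding n_exact_def by (rule conjunct1)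
  define W' where "W' = X 2"
  have nsq: "nseq C n X d" and cz: "\<forall>i<n. Cmp C (X i) (X (Suc i)) (X (Suc (Suc i))) (d (Suc i)) (d i) = Zer C (X i) (X (Suc (Suc i)))"
    using cok unfolding is_ncokernel_def by simp_all
  have obs: "\<forall>i\<le>Suc n. X i \<in> Ob C" and mors: "\<forall>i\<le>n. d i \<in> Mor C (X i) (X (Suc i))"
    using nsq unfolding nseq_def by simp_all
  have W': "W' \<in> Ob C" unfolding W'_def using obs n1 by simp
  have d1: "d 1 \<in> Mor C P W'" unfolding W'_def using mors n1 X1 by (auto simp: numeral_2_eq_2)
  have d1d0: "Cmp C Z P W' (d 1) d0 = Zer C Z W'" unfolding W'_def
    using spec[OF cz, of 0] n1 X0 X1 d0d by (simp add: numeral_2_eq_2)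
  have kk: "\<forall>V\<in>Ob C. \<forall>i. 1 \<le> i \<and> i \<le> n \<longrightarrow>
           (\<forall>g\<in>Mor C V (X i). Cmp C V (X i) (X (Suc i)) (d i) g = Zer C V (X (Suc i)) \<longrightarrow>
              (\<exists>h\<in>Mor C V (X (i - 1)). Cmp C V (X (i - 1)) (X i) (d (i - 1)) h = g))"
    using ker unfolding is_nkernel_def by blast
  have wk: "\<exists>e\<in>Mor C V Z. Cmp C V Z P d0 e = g"
    if "V \<in> Ob C" "g \<in> Mor C V P" "Cmp C V P W' (d 1) g = Zer C V W'" for V g
  proof -
    have "\<forall>g\<in>Mor C V (X 1). Cmp C V (X 1) (X (Suc 1)) (d 1) g = Zer C V (X (Suc 1)) \<longrightarrow>
              (\<exists>h\<in>Mor C V (X (1 - 1)). Cmp C V (X (1 - 1)) (X 1) (d (1 - 1)) h = g)"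
      using kk that(1) n1 by blast
    then show ?thesis using that X0 X1 d0d unfolding W'_def by (simp add: numeral_2_eq_2)
  qed
  define g where "g = Cmp C W P W' (d 1) i1"
  define h' where "h' = neg C Y W' (Cmp C Y P W' (d 1) i2)"
  have gM: "g \<in> Mor C W W'" unfolding g_def by (rule pa_cmp[OF W P W' i1 d1])
  have d1i2: "Cmp C Y P W' (d 1) i2 \<in> Mor C Y W'" by (rule pa_cmp[OF Y P W' i2 d1])
  have h'M: "h' \<in> Mor C Y W'" unfolding h'_def by (rule pa_neg[OF Y W' d1i2])
  have comm: "Cmp C Z W W' g h = Cmp C Z Y W' h' f"
  proof -
    have gh: "Cmp C Z W W' g h = Cmp C Z P W' (d 1) (Cmp C Z W P i1 h)"
      unfolding g_def by (rule pa_assoc[OF Z W P W' hm i1 d1, symmetric])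
    have hf: "Cmp C Z Y W' h' f = neg C Z W' (Cmp C Z P W' (d 1) (Cmp C Z Y P i2 f))"
      unfolding h'_def using cmp_neg_l[OF Z Y W' fM d1i2] pa_assoc[OF Z Y P W' fM i2 d1] by simp
    have "Add C Z W' (Cmp C Z P W' (d 1) (Cmp C Z W P i1 h)) (Cmp C Z P W' (d 1) (Cmp C Z Y P i2 f)) = Zer C Z W'"
      using d1d0 pa_distr[OF Z P W' i1h i2f d1] unfolding d0_def by simp
    then have "Cmp C Z P W' (d 1) (Cmp C Z W P i1 h) = neg C Z W' (Cmp C Z P W' (d 1) (Cmp C Z Y P i2 f))"
      by (rule pa_eq_neg[OF Z W' pa_cmp[OF Z P W' i1h d1] pa_cmp[OF Z P W' i2f d1]])
    then show ?thesis using gh hf by simp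
  qed
  have gmono: "cat_mono C W W' g"
    unfolding cat_mono_def
  proof (intro conjI gM ballI impI)
    fix V a b assume V: "V \<in> Ob C" and a: "a \<in> Mor C V W" and b: "b \<in> Mor C V W"
      and eq: "Cmp C V W W' g a = Cmp C V W W' g b"
    define c where "c = Add C V W a (neg C V W b)"
    have nb: "neg C V W b \<in> Mor C V W" by (rule pa_neg[OF V W b])
    have cM: "c \<in> Mor C V W" unfolding c_def by (rule pa_add[OF V W a nb])
    have gb: "Cmp C V W W' g b \<in> Mor C V W'" by (rule pa_cmp[OF V W W' b gM])
    have gc: "Cmp C V W W' g c = Zer C V W'"
    proof -
      have "Cmp C V W W' g c = Add C V W' (Cmp C V W W' g a) (Cmp C V W W' g (neg C V W b))"
        unfolding c_def by (rule pa_distr[OF V W W' a nb gM])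
      also have "Cmp C V W W' g (neg C V W b) = neg C V W' (Cmp C V W W' g b)"
        by (rule cmp_neg_r[OF V W W' b gM])
      finally show ?thesis using eq pa_add_neg[OF V W' gb] by simp
    qed
    have i1c: "Cmp C V W P i1 c \<in> Mor C V P" by (rule pa_cmp[OF V W P cM i1])
    have "Cmp C V P W' (d 1) (Cmp C V W P i1 c) = Cmp C V W W' g c"
      unfolding g_def by (rule pa_assoc[OF V W P W' cM i1 d1])
    then obtain e where eM: "e \<in> Mor C V Z" and e: "Cmp C V Z P d0 e = Cmp C V W P i1 c"
      using wk[OF V i1c] gc by auto
    have "Cmp C V Z Y f e = Cmp C V P Y p2 (Cmp C V Z P d0 e)"
      using p2d0 pa_assoc[OF V Z P Y eM d0M p2] by simp
    also have "\<dots> = Cmp C V W Y (Cmp C W P Y p2 i1) c" unfolding e by (rule pa_assoc[OF V W P Y cM i1 p2])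
    also have "\<dots> = Zer C V Y" unfolding p2i1 by (rule cmp_zer_l[OF V W Y cM])
    also have "\<dots> = Cmp C V Z Y f (Zer C V Z)" by (rule cmp_zer_r[OF V Z Y fM, symmetric])
    finally have "e = Zer C V Z" using fm V eM pa_zer[OF V Z] unfolding cat_mono_def by blast
    then have i1c0: "Cmp C V W P i1 c = Zer C V P" using e cmp_zer_r[OF V Z P d0M] by simp
    have "c = Cmp C V W W (Cmp C W P W p1 i1) c" unfolding p1i1 by (rule pa_idl[OF V W cM, symmetric])
    also have "\<dots> = Cmp C V P W p1 (Cmp C V W P i1 c)" by (rule pa_assoc[OF V W P W cM i1 p1, symmetric])
    also have "\<dots> = Zer C V W" unfolding i1c0 by (rule cmp_zer_r[OF V P W p1])
    finally show "a = b" using pa_sub_zero[OF V W a b] unfolding c_def by blast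
  qed
  show ?thesis using W' gmono h'M comm by blast
qed

end

lemma af_grp: "additive_functor C FO FM \<Longrightarrow> X \<in> Ob C \<Longrightarrow> comm_group (FO X)"
  unfolding additive_functor_def by (drule conjunct1) blast
lemma af_hom: "additive_functor C FO FM \<Longrightarrow> X \<in> Ob C \<Longrightarrow> Y \<in> Ob C \<Longrightarrow> f \<in> Mor C X Y \<Longrightarrow> FM X Y f \<in> hom (FO X) (FO Y)"
  unfolding additive_functor_def by (drule conjunct2, drule conjunct1) blast
lemma af_id: "additive_functor C FO FM \<Longrightarrow> X \<in> Ob C \<Longrightarrow> x \<in> carrier (FO X) \<Longrightarrow> FM X X (Idm C X) x = x"
  unfolding additive_functor_def by (drule conjunct2, drule conjunct2, drule conjunct1) blast
lemma af_cmp: "additive_functor C FO FM \<Longrightarrow> X \<in> Ob C \<Longrightarrow> Y \<in> Ob C \<Longrightarrow> Z \<in> Ob C \<Longrightarrow> f \<in> Mor C X Y \<Longrightarrow> g \<in> Mor C Y Z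
   \<Longrightarrow> x \<in> carrier (FO X) \<Longrightarrow> FM X Z (Cmp C X Y Z g f) x = FM Y Z g (FM X Y f x)"
  unfolding additive_functor_def by (drule conjunct2, drule conjunct2, drule conjunct2, drule conjunct1) blast
lemma af_add: "additive_functor C FO FM \<Longrightarrow> X \<in> Ob C \<Longrightarrow> Y \<in> Ob C \<Longrightarrow> f \<in> Mor C X Y \<Longrightarrow> g \<in> Mor C X Y
   \<Longrightarrow> x \<in> carrier (FO X) \<Longrightarrow> FM X Y (Add C X Y f g) x = FM X Y f x \<otimes>\<^bsub>FO Y\<^esub> FM X Y g x"
  unfolding additive_functor_def by (drule conjunct2, drule conjunct2, drule conjunct2, drule conjunct2) blast
lemma af_car: "additive_functor C FO FM \<Longrightarrow> X \<in> Ob C \<Longrightarrow> Y \<in> Ob C \<Longrightarrow> f \<in> Mor C X Y \<Longrightarrow> x \<in> carrier (FO X)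
   \<Longrightarrow> FM X Y f x \<in> carrier (FO Y)"
proof -
  assume as: "additive_functor C FO FM" "X \<in> Ob C" "Y \<in> Ob C" "f \<in> Mor C X Y" "x \<in> carrier (FO X)"
  have "FM X Y f \<in> carrier (FO X) \<rightarrow> carrier (FO Y)" using af_hom[OF as(1-4)] by (simp add: hom_def)
  then show ?thesis using as(5) by (rule funcset_mem)
qed
lemma af_one: "additive_functor C FO FM \<Longrightarrow> X \<in> Ob C \<Longrightarrow> Y \<in> Ob C \<Longrightarrow> f \<in> Mor C X Y
   \<Longrightarrow> FM X Y f \<one>\<^bsub>FO X\<^esub> = \<one>\<^bsub>FO Y\<^esub>"
proof -
  assume as: "additive_functor C FO FM" "X \<in> Ob C" "Y \<in> Ob C" "f \<in> Mor C X Y"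
  show ?thesis
    by (rule hom_one[OF af_hom[OF as] comm_group.axioms(2)[OF af_grp[OF as(1,2)]] comm_group.axioms(2)[OF af_grp[OF as(1,3)]]])
qed

lemma af_zer: assumes pa: "preadditive C" and af: "additive_functor C FO FM" and ob: "X \<in> Ob C" "Y \<in> Ob C"
   and x: "x \<in> carrier (FO X)" shows "FM X Y (Zer C X Y) x = \<one>\<^bsub>FO Y\<^esub>"
proof -
  interpret G: comm_group "FO Y" using af_grp[OF af ob(2)] .
  have z: "Zer C X Y \<in> Mor C X Y" by (rule pa_zer[OF pa ob])
  have c: "FM X Y (Zer C X Y) x \<in> carrier (FO Y)" by (rule af_car[OF af ob z x])
  have "FM X Y (Zer C X Y) x = FM X Y (Zer C X Y) x \<otimes>\<^bsub>FO Y\<^esub> FM X Y (Zer C X Y) x"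
    using af_add[OF af ob z z x] pa_zer_add[OF pa ob z] by simp
  then show ?thesis using G.l_cancel_one'[OF c c] by simp
qed

lemma af_neg: assumes pa: "preadditive C" and af: "additive_functor C FO FM" and ob: "X \<in> Ob C" "Y \<in> Ob C"
   and f: "f \<in> Mor C X Y" and x: "x \<in> carrier (FO X)"
   shows "FM X Y (neg C X Y f) x = inv\<^bsub>FO Y\<^esub> (FM X Y f x)"
proof -
  interpret G: comm_group "FO Y" using af_grp[OF af ob(2)] .
  have nf: "neg C X Y f \<in> Mor C X Y" by (rule pa_neg[OF pa ob f])
  have "FM X Y f x \<otimes>\<^bsub>FO Y\<^esub> FM X Y (neg C X Y f) x = \<one>\<^bsub>FO Y\<^esub>"
    using af_add[OF af ob f nf x] pa_add_neg[OF pa ob f] af_zer[OF pa af ob x] by simp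
  moreover have "FM X Y f x \<in> carrier (FO Y)" "FM X Y (neg C X Y f) x \<in> carrier (FO Y)"
    using af_car[OF af ob f x] af_car[OF af ob nf x] by auto
  ultimately show ?thesis using G.inv_equality[of "FM X Y (neg C X Y f) x" "FM X Y f x"] G.m_comm by simp
qed

theorem mainTheorem4:
  fixes C :: "('o,'m) addcat" and n :: nat
    and MO :: "'o \<Rightarrow> 'a monoid" and MM :: "'o \<Rightarrow> 'o \<Rightarrow> 'm \<Rightarrow> 'a \<Rightarrow> 'a"
    and EO :: "'o \<Rightarrow> 'b monoid" and EM :: "'o \<Rightarrow> 'o \<Rightarrow> 'm \<Rightarrow> 'b \<Rightarrow> 'b"
    and \<eta> :: "'o \<Rightarrow> 'a \<Rightarrow> 'b"
  assumes "1 \<le> n"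
    and "n_abelian C n"
    and "additive_functor C MO MM"
    and "mono_functor C MO MM"
    and "additive_functor C EO EM"
    and "essential_extension C MO MM EO EM \<eta>"
  shows "mono_functor C EO EM"
proof -
  note n1 = assms(1) and na = assms(2) and afM = assms(3) and mfM = assms(4) and afE = assms(5)
    and ess = assms(6)
  have pa: "preadditive C" using na unfolding n_abelian_def additive_def by (rule conjunct1[OF conjunct1])
  have nm: "nat_mono C MO MM EO EM \<eta>" using ess unfolding essential_extension_def by (rule conjunct1)
  have ntr: "nat_trans C MO MM EO EM \<eta>" using nm unfolding nat_mono_def by (rule conjunct1)
  have etainj: "inj_on (\<eta> X) (carrier (MO X))" if "X \<in> Ob C" for X
    using nm that unfolding nat_mono_def by blast
  have etahom: "\<eta> X \<in> hom (MO X) (EO X)" if "X \<in> Ob C" for X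
    using ntr that unfolding nat_trans_def by blast
  have etanat: "\<eta> Y (MM X Y f x) = EM X Y f (\<eta> X x)"
    if "X \<in> Ob C" "Y \<in> Ob C" "f \<in> Mor C X Y" "x \<in> carrier (MO X)" for X Y f x
    using ntr that unfolding nat_trans_def by blast
  have etaone: "\<eta> X \<one>\<^bsub>MO X\<^esub> = \<one>\<^bsub>EO X\<^esub>" if X: "X \<in> Ob C" for X
    by (rule hom_one[OF etahom[OF X] comm_group.axioms(2)[OF af_grp[OF afM X]] comm_group.axioms(2)[OF af_grp[OF afE X]]])
  have essq: "\<forall>(BO :: 'o \<Rightarrow> 'b monoid) BM \<iota>.
        additive_functor C BO BM \<and> nat_mono C BO BM EO EM \<iota> \<and> nonzero_functor C BO \<longrightarrow>
        (\<exists>X\<in>Ob C. \<exists>y. y \<in> \<eta> X ` carrier (MO X) \<and> y \<in> \<iota> X ` carrier (BO X) \<and> y \<noteq> \<one>\<^bsub>EO X\<^esub>)"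
    using ess unfolding essential_extension_def by (rule conjunct2)
  show ?thesis unfolding mono_functor_def
  proof (intro ballI allI impI)
    fix X Y f assume X: "X \<in> Ob C" and Y: "Y \<in> Ob C" and fm: "cat_mono C X Y f"
    have fM: "f \<in> Mor C X Y" using fm unfolding cat_mono_def by (rule conjunct1)
    have GX: "group (EO X)" by (rule comm_group.axioms(2)[OF af_grp[OF afE X]])
    have GY: "group (EO Y)" by (rule comm_group.axioms(2)[OF af_grp[OF afE Y]])
    have hh: "EM X Y f \<in> hom (EO X) (EO Y)" by (rule af_hom[OF afE X Y fM])
    interpret GH: group_hom "EO X" "EO Y" "EM X Y f"
      unfolding group_hom_def group_hom_axioms_def using GX GY hh by blast
    have triv: "x = \<one>\<^bsub>EO X\<^esub>" if x: "x \<in> carrier (EO X)" and fx: "EM X Y f x = \<one>\<^bsub>EO Y\<^esub>" for x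
    proof (rule ccontr)
      assume xne: "x \<noteq> \<one>\<^bsub>EO X\<^esub>"
      define S where "S W = {EM X W k x | k. k \<in> Mor C X W}" for W
      define BO where "BO W = (EO W)\<lparr>carrier := S W\<rparr>" for W
      have Ssub: "S W \<subseteq> carrier (EO W)" if W: "W \<in> Ob C" for W
      proof
        fix y assume "y \<in> S W"
        then obtain k where k: "k \<in> Mor C X W" and y: "y = EM X W k x" unfolding S_def by blast
        show "y \<in> carrier (EO W)" unfolding y by (rule af_car[OF afE X W k x])
      qed
      have Ssubgrp: "subgroup (S W) (EO W)" if W: "W \<in> Ob C" for W
      proof -
        interpret G: comm_group "EO W" by (rule af_grp[OF afE W])
        show ?thesis
        proof (rule G.subgroupI)
          show "S W \<subseteq> carrier (EO W)" by (rule Ssub[OF W])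
          have "EM X W (Zer C X W) x \<in> S W" unfolding S_def using pa_zer[OF pa X W] by blast
          then show "S W \<noteq> {}" by blast
        next
          fix a assume "a \<in> S W"
          then obtain k where k: "k \<in> Mor C X W" and a: "a = EM X W k x" unfolding S_def by blast
          have "inv\<^bsub>EO W\<^esub> a = EM X W (neg C X W k) x" using af_neg[OF pa afE X W k x] a by simp
          then show "inv\<^bsub>EO W\<^esub> a \<in> S W" unfolding S_def using pa_neg[OF pa X W k] by blast
        next
          fix a b assume "a \<in> S W" "b \<in> S W"
          then obtain k l where k: "k \<in> Mor C X W" and a: "a = EM X W k x"
            and l: "l \<in> Mor C X W" and b: "b = EM X W l x" unfolding S_def by blast
          have "a \<otimes>\<^bsub>EO W\<^esub> b = EM X W (Add C X W k l) x" using af_add[OF afE X W k l x] a b by simp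
          then show "a \<otimes>\<^bsub>EO W\<^esub> b \<in> S W" unfolding S_def using pa_add[OF pa X W k l] by blast
        qed
      qed
      have BOgrp: "comm_group (BO W)" if W: "W \<in> Ob C" for W
      proof -
        interpret G: comm_group "EO W" by (rule af_grp[OF afE W])
        have gB: "group (BO W)" unfolding BO_def by (rule G.subgroup_imp_group[OF Ssubgrp[OF W]])
        show ?thesis
        proof (rule group.group_comm_groupI[OF gB])
          fix a b assume "a \<in> carrier (BO W)" "b \<in> carrier (BO W)"
          then have "a \<in> carrier (EO W)" "b \<in> carrier (EO W)" using Ssub[OF W] unfolding BO_def by auto
          then show "a \<otimes>\<^bsub>BO W\<^esub> b = b \<otimes>\<^bsub>BO W\<^esub> a" unfolding BO_def using G.m_comm by simp
        qed
      qed
      have SM: "EM W W' k y \<in> S W'" if "W \<in> Ob C" "W' \<in> Ob C" "k \<in> Mor C W W'" "y \<in> S W" for W W' k y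
      proof -
        obtain l where l: "l \<in> Mor C X W" and y: "y = EM X W l x" using \<open>y \<in> S W\<close> unfolding S_def by blast
        have "EM W W' k y = EM X W' (Cmp C X W W' k l) x" using af_cmp[OF afE X that(1,2) l that(3) x] y by simp
        then show ?thesis unfolding S_def using pa_cmp[OF pa X that(1,2) l that(3)] by blast
      qed
      have afB: "additive_functor C BO EM"
        unfolding additive_functor_def
      proof (intro conjI ballI)
        show "comm_group (BO W)" if "W \<in> Ob C" for W by (rule BOgrp[OF that])
      next
        fix W W' k assume W: "W \<in> Ob C" and W': "W' \<in> Ob C" and k: "k \<in> Mor C W W'"
        have hk: "EM W W' k \<in> hom (EO W) (EO W')" by (rule af_hom[OF afE W W' k])
        show "EM W W' k \<in> hom (BO W) (BO W')"
          unfolding hom_def BO_def using SM[OF W W' k] Ssub[OF W] hk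
          by (auto simp: hom_def dest!: subsetD[OF Ssub[OF W]])
      next
        fix W y assume W: "W \<in> Ob C" and y: "y \<in> carrier (BO W)"
        have "y \<in> carrier (EO W)" using y Ssub[OF W] unfolding BO_def by auto
        then show "EM W W (Idm C W) y = y" by (rule af_id[OF afE W])
      next
        fix W W' W'' k l y assume W: "W \<in> Ob C" "W' \<in> Ob C" "W'' \<in> Ob C" and k: "k \<in> Mor C W W'" "l \<in> Mor C W' W''"
          and y: "y \<in> carrier (BO W)"
        have "y \<in> carrier (EO W)" using y Ssub[OF W(1)] unfolding BO_def by auto
        then show "EM W W'' (Cmp C W W' W'' l k) y = EM W' W'' l (EM W W' k y)"
          by (rule af_cmp[OF afE W k])
      next
        fix W W' k l y assume W: "W \<in> Ob C" "W' \<in> Ob C" and k: "k \<in> Mor C W W'" "l \<in> Mor C W W'"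
          and y: "y \<in> carrier (BO W)"
        have "y \<in> carrier (EO W)" using y Ssub[OF W(1)] unfolding BO_def by auto
        then show "EM W W' (Add C W W' k l) y = EM W W' k y \<otimes>\<^bsub>BO W'\<^esub> EM W W' l y"
          using af_add[OF afE W k] unfolding BO_def by simp
      qed
      have nmB: "nat_mono C BO EM EO EM (\<lambda>W y. y)"
        unfolding nat_mono_def nat_trans_def
        using Ssub by (auto simp: hom_def BO_def)
      have nzB: "nonzero_functor C BO"
        unfolding nonzero_functor_def
      proof (intro bexI[OF _ X])
        have "x = EM X X (Idm C X) x" using af_id[OF afE X x] by simp
        then have "x \<in> S X" unfolding S_def using pa_id[OF pa X] by blast
        then show "carrier (BO X) \<noteq> {\<one>\<^bsub>BO X\<^esub>}" using xne unfolding BO_def by auto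
      qed
      have "\<exists>X\<in>Ob C. \<exists>y. y \<in> \<eta> X ` carrier (MO X) \<and> y \<in> (\<lambda>y. y) ` carrier (BO X) \<and> y \<noteq> \<one>\<^bsub>EO X\<^esub>"
        using spec[OF spec[OF spec[OF essq, of BO], of EM], of "\<lambda>W y. y"] afB nmB nzB by blast
      then obtain W y where W: "W \<in> Ob C" and ym: "y \<in> \<eta> W ` carrier (MO W)"
        and yb: "y \<in> (\<lambda>y. y) ` carrier (BO W)" and yne: "y \<noteq> \<one>\<^bsub>EO W\<^esub>"
        by blast
      obtain m where m: "m \<in> carrier (MO W)" and ym: "y = \<eta> W m" using ym by blast
      obtain k where k: "k \<in> Mor C X W" and yk: "y = EM X W k x" using yb unfolding BO_def S_def by auto
      obtain W' g h' where W': "W' \<in> Ob C" and gm: "cat_mono C W W' g" and h': "h' \<in> Mor C Y W'"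
        and comm: "Cmp C X W W' g k = Cmp C X Y W' h' f"
        using pushout_mono[OF pa na n1 X Y W fm k] by blast
      have gM: "g \<in> Mor C W W'" using gm unfolding cat_mono_def by (rule conjunct1)
      have GMW: "group (MO W)" by (rule comm_group.axioms(2)[OF af_grp[OF afM W]])
      have GMW': "group (MO W')" by (rule comm_group.axioms(2)[OF af_grp[OF afM W']])
      have "\<eta> W' (MM W W' g m) = EM W W' g (\<eta> W m)" by (rule etanat[OF W W' gM m])
      also have "\<dots> = EM X W' (Cmp C X W W' g k) x" using ym yk af_cmp[OF afE X W W' k gM x] by simp
      also have "\<dots> = EM Y W' h' (EM X Y f x)" using comm af_cmp[OF afE X Y W' fM h' x] by simp
      also have "\<dots> = \<one>\<^bsub>EO W'\<^esub>" using fx af_one[OF afE Y W' h'] by simp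
      also have "\<dots> = \<eta> W' \<one>\<^bsub>MO W'\<^esub>" using etaone[OF W'] by simp
      finally have "MM W W' g m = \<one>\<^bsub>MO W'\<^esub>"
        by (rule inj_onD[OF etainj[OF W'] _ af_car[OF afM W W' gM m] monoid.one_closed[OF group.is_monoid[OF GMW']]])
      also have "\<dots> = MM W W' g \<one>\<^bsub>MO W\<^esub>" using af_one[OF afM W W' gM] by simp
      finally have mm: "MM W W' g m = MM W W' g \<one>\<^bsub>MO W\<^esub>" .
      have "inj_on (MM W W' g) (carrier (MO W))" using mfM W W' gm unfolding mono_functor_def by blast
      then have "m = \<one>\<^bsub>MO W\<^esub>" by (rule inj_onD[OF _ mm m monoid.one_closed[OF group.is_monoid[OF GMW]]])
      then have "y = \<one>\<^bsub>EO W\<^esub>" using ym etaone[OF W] by simp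
      then show False using yne by blast
    qed
    show "inj_on (EM X Y f) (carrier (EO X))"
    proof (rule inj_onI)
      fix a b assume a: "a \<in> carrier (EO X)" and b: "b \<in> carrier (EO X)" and eq: "EM X Y f a = EM X Y f b"
      have ib: "inv\<^bsub>EO X\<^esub> b \<in> carrier (EO X)" by (rule group.inv_closed[OF GX b])
      have ab: "a \<otimes>\<^bsub>EO X\<^esub> inv\<^bsub>EO X\<^esub> b \<in> carrier (EO X)" by (rule monoid.m_closed[OF group.is_monoid[OF GX] a ib])
      have fb: "EM X Y f b \<in> carrier (EO Y)" by (rule af_car[OF afE X Y fM b])
      have "EM X Y f (a \<otimes>\<^bsub>EO X\<^esub> inv\<^bsub>EO X\<^esub> b) = EM X Y f a \<otimes>\<^bsub>EO Y\<^esub> inv\<^bsub>EO Y\<^esub> (EM X Y f b)"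
        using a b ib by simp
      also have "\<dots> = \<one>\<^bsub>EO Y\<^esub>" unfolding eq by (rule group.r_inv[OF GY fb])
      finally have "a \<otimes>\<^bsub>EO X\<^esub> inv\<^bsub>EO X\<^esub> b = \<one>\<^bsub>EO X\<^esub>" by (rule triv[OF ab])
      then have "inv\<^bsub>EO X\<^esub> (inv\<^bsub>EO X\<^esub> b) = a" by (rule group.inv_equality[OF GX _ ib a])
      then show "a = b" using group.inv_inv[OF GX b] by simp
    qed
  qed
qed

end
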